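(* Let $d\ge2$, $s_n=2(\log n)^2$, $s_{n,+}=(3s_n)^d$ and $W_{s_{n,+}}=[-s_{n,+}^{1/d}/2,s_{n,+}^{1/d}/2]^d$. If $\varepsilon>0$ is sufficiently small, then $$\big|\{(x_0,x_1,x_2)\in W_{s_{n,+}}^3:\ d_{01}<d_{012}\le d_{01}+n^{-2+\varepsilon}\}\big|\in O(n^{-1/4})\quad(n\to\infty),$$ where $|\cdot|$ denotes Lebesgue measure on $(\mathbb R^d)^3$.
   Context: $d_{01}=|x_0-x_1|/2$, and $d_{012}=\inf\{r>0: B_r(x_0)\cap B_r(x_1)\cap B_r(x_2)\ne\varnothing\}$ is the Čech filtration time of the triangle $\{x_0,x_1,x_2\}$. *)

theory Defs
  imports "HOL-Analysis.Analysis" "HOL-Library.Landau_Symbols"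
begin

definition d01 :: "real^'n \<Rightarrow> real^'n \<Rightarrow> real" where
  "d01 x0 x1 = dist x0 x1 / 2"

definition d012 :: "real^'n \<Rightarrow> real^'n \<Rightarrow> real^'n \<Rightarrow> real" where
  "d012 x0 x1 x2 = Inf {r. r > 0 \<and> ball x0 r \<inter> ball x1 r \<inter> ball x2 r \<noteq> {}}"

definition s_n :: "nat \<Rightarrow> real" where
  "s_n n = 2 * (ln (real n))^2"

definition s_plus :: "nat \<Rightarrow> nat \<Rightarrow> real" where
  "s_plus d n = (3 * s_n n) ^ d"

definition W :: "real \<Rightarrow> (real^'n) set" where
  "W s = {x. \<forall>i. \<bar>x $ i\<bar> \<le> s powr (1 / real CARD('n)) / 2}"

end

theory Submission
  imports Defs
begin

lemma d012_set_ne: "{r. r > 0 \<and> ball x0 r \<inter> ball x1 r \<inter> ball x2 r \<noteq> {}} \<noteq> {}"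
proof -
  let ?t = "1 + dist x0 x1 + dist x0 x2"
  have "x0 \<in> ball x0 ?t \<inter> ball x1 ?t \<inter> ball x2 ?t"
    by (auto simp: dist_commute add_pos_nonneg)
  moreover have "?t > 0" using zero_le_dist[of x0 x1] zero_le_dist[of x0 x2] by linarith
  ultimately show ?thesis by blast
qed

lemma aux_lin: "(a::real) + b = 2*(c+d) \<Longrightarrow> c < tt \<Longrightarrow> d < tt \<Longrightarrow> b = 4*rr \<Longrightarrow> a < 4*tt - 4*rr"
  by (smt (verit))

lemma geo1:
  fixes x0 x1 x2 :: "real^'n"
  assumes "d01 x0 x1 < d012 x0 x1 x2"
  shows "d01 x0 x1 < dist x2 (midpoint x0 x1)"
proof (rule ccontr)
  assume H: "\<not> ?thesis"
  let ?S = "{r. r > 0 \<and> ball x0 r \<inter> ball x1 r \<inter> ball x2 r \<noteq> {}}"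
  have dm0: "dist x0 (midpoint x0 x1) = d01 x0 x1" "dist x1 (midpoint x0 x1) = d01 x0 x1"
    by (simp_all add: d01_def dist_midpoint)
  have "d012 x0 x1 x2 \<le> t" if "t > d01 x0 x1" for t
  proof -
    have "t > 0" using that zero_le_dist[of x0 x1] unfolding d01_def by linarith
    moreover have "midpoint x0 x1 \<in> ball x0 t \<inter> ball x1 t \<inter> ball x2 t"
      using that H dm0 by (auto simp: dist_commute)
    ultimately have "t \<in> ?S" by auto
    then show ?thesis unfolding d012_def
      by (intro cInf_lower) (auto intro!: bdd_belowI[where m=0])
  qed
  then have "d012 x0 x1 x2 \<le> d01 x0 x1"
    by (metis dense not_le)
  with assms show False by simp
qed

lemma geo2:
  fixes x0 x1 x2 :: "real^'n"
  assumes "d012 x0 x1 x2 \<le> d01 x0 x1 + \<delta>" "\<delta> > 0"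
  shows "dist x2 (midpoint x0 x1) < d01 x0 x1 + 2*\<delta> + sqrt (4 * d01 x0 x1 * \<delta> + 4 * \<delta>^2)"
proof -
  let ?S = "{r. r > 0 \<and> ball x0 r \<inter> ball x1 r \<inter> ball x2 r \<noteq> {}}"
  define r where "r = d01 x0 x1"
  define t where "t = r + 2*\<delta>"
  have r0: "r \<ge> 0" by (simp add: r_def d01_def)
  have "Inf ?S < t" using assms unfolding t_def r_def d012_def by simp
  then obtain t' where "t' \<in> ?S" "t' < t"
    using cInf_lessD[OF d012_set_ne] by blast
  then obtain p where "dist x0 p < t'" "dist x1 p < t'" "dist x2 p < t'"
    by (auto simp: mem_ball)
  with \<open>t' < t\<close> have p: "dist x0 p < t" "dist x1 p < t" "dist x2 p < t" by auto
  have pl: "norm (u + v)^2 + norm (u - v)^2 = 2 * (norm u ^2 + norm v^2)" for u v :: "real^'n"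
    by (simp add: power2_norm_eq_inner inner_add_left inner_add_right inner_diff_left inner_diff_right inner_commute)
  define u where "u = p - x0"
  define v where "v = p - x1"
  have e1: "p - midpoint x0 x1 = (1/2) *\<^sub>R (u + v)"
  proof -
    have "(1/2::real) *\<^sub>R (u + v) = (1/2::real) *\<^sub>R (p + p) - (1/2::real) *\<^sub>R (x0 + x1)"
      unfolding u_def v_def by (simp add: algebra_simps)
    then show ?thesis by (simp add: midpoint_def)
  qed
  have e2: "x0 - x1 = v - u" unfolding u_def v_def by simp
  have "norm (u + v)^2 + norm (v - u)^2 = 2 * (norm u ^2 + norm v^2)"
    using pl[of v u] by (simp add: add.commute)
  moreover have "norm u < t" "norm v < t" using p u_def v_def by (simp_all add: dist_norm norm_minus_commute)
  moreover have "norm (v - u) = 2 * r" using e2 by (simp add: r_def d01_def dist_norm)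
  moreover have "dist p (midpoint x0 x1) = norm (u + v) / 2"
    using e1 by (simp add: dist_norm)
  ultimately have "dist p (midpoint x0 x1)^2 < t^2 - r^2"
  proof -
    assume A: "norm (u + v)^2 + norm (v - u)^2 = 2 * (norm u ^2 + norm v^2)"
      "norm u < t" "norm v < t" "norm (v - u) = 2 * r" "dist p (midpoint x0 x1) = norm (u + v) / 2"
    have "norm u ^2 < t^2" "norm v^2 < t^2" using A(2,3) by (simp_all add: power_strict_mono)
    moreover have "norm (v - u)^2 = 4 * r^2" using A(4) by (simp add: power_mult_distrib)
    moreover have "dist p (midpoint x0 x1)^2 = norm (u + v)^2 / 4" unfolding A(5) by (simp add: power_divide)
    ultimately have "(norm (u + v))\<^sup>2 < 4 * t^2 - 4 * r^2" using aux_lin[OF A(1)] by blast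
    then show ?thesis using \<open>dist p (midpoint x0 x1)^2 = norm (u + v)^2 / 4\<close> by simp
  qed
  then have "dist p (midpoint x0 x1) < sqrt (t^2 - r^2)"
    by (simp add: real_less_rsqrt)
  moreover have "t^2 - r^2 = 4 * r * \<delta> + 4 * \<delta>^2" unfolding t_def by algebra
  ultimately have "dist p (midpoint x0 x1) < sqrt (4 * r * \<delta> + 4 * \<delta>^2)" by simp
  then have "dist x2 (midpoint x0 x1) < t + sqrt (4 * r * \<delta> + 4 * \<delta>^2)"
    using p(3) dist_triangle[of x2 "midpoint x0 x1" p] by linarith
  then show ?thesis unfolding t_def r_def by simp
qed

lemma power_diff_bound:
  fixes r h :: real assumes "r \<ge> 0" "h \<ge> 0"
  shows "(r+h)^n - r^n \<le> real n * h * (r+h)^(n-1)"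
proof (induction n)
  case 0 then show ?case by simp
next
  case (Suc n)
  have "(r+h)^Suc n - r^Suc n = (r+h) * ((r+h)^n - r^n) + h * r^n" by (simp add: algebra_simps)
  also have "\<dots> \<le> (r+h) * (real n * h * (r+h)^(n-1)) + h * (r+h)^n"
    using Suc assms by (intro add_mono mult_left_mono mult_mono power_mono) auto
  also have "\<dots> = real (Suc n) * h * (r+h)^n"
  proof (cases n)
    case 0 then show ?thesis by simp
  next
    case (Suc k) then show ?thesis by (simp add: algebra_simps)
  qed
  finally show ?case by simp
qed

lemma shell_bound:
  fixes m :: "'a::euclidean_space"
  assumes "r \<ge> 0" "h \<ge> 0"
  shows "emeasure lborel {x. r < dist x m \<and> dist x m \<le> r + h}
     \<le> ennreal (unit_ball_vol DIM('a) * DIM('a) * h * (r+h)^(DIM('a)-1))"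
proof -
  let ?K = "unit_ball_vol (real DIM('a))"
  have sub: "{x. r < dist x m \<and> dist x m \<le> r + h} \<subseteq> cball m (r+h) - cball m r"
    by (auto simp: dist_commute)
  have "emeasure lborel {x. r < dist x m \<and> dist x m \<le> r + h} \<le> emeasure lborel (cball m (r+h) - cball m r)"
    using sub by (intro emeasure_mono) auto
  also have "\<dots> = emeasure lborel (cball m (r+h)) - emeasure lborel (cball m r)"
    using assms by (intro emeasure_Diff) (auto simp: emeasure_cball)
  also have "\<dots> = ennreal (?K * (r+h)^DIM('a)) - ennreal (?K * r^DIM('a))"
    using assms by (simp add: emeasure_cball)
  also have "\<dots> = ennreal (?K * (r+h)^DIM('a) - ?K * r^DIM('a))"
    using assms by (intro ennreal_minus) (auto intro!: mult_left_mono power_mono)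
  also have "\<dots> \<le> ennreal (?K * (DIM('a) * h * (r+h)^(DIM('a)-1)))"
    using power_diff_bound[OF assms, of "DIM('a)"]
    by (intro ennreal_leI) (simp add: right_diff_distrib[symmetric])
  finally show ?thesis by (simp add: mult.assoc)
qed

definition Wc :: "real \<Rightarrow> (real^'n) set" where
  "Wc c = {x. \<forall>i. \<bar>x $ i\<bar> \<le> c}"

definition hf :: "real \<Rightarrow> real \<Rightarrow> real" where
  "hf r \<delta> = 2*\<delta> + sqrt (4*r*\<delta> + 4*\<delta>^2)"

definition Tset :: "real \<Rightarrow> real \<Rightarrow> ((real^'n) \<times> (real^'n) \<times> (real^'n)) set" where
  "Tset c \<delta> = {z. fst z \<in> Wc c \<and> fst (snd z) \<in> Wc c \<and>
      dist (fst z) (fst (snd z)) / 2 < dist (snd (snd z)) (midpoint (fst z) (fst (snd z))) \<and>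
      dist (snd (snd z)) (midpoint (fst z) (fst (snd z))) \<le> dist (fst z) (fst (snd z)) / 2 + hf (dist (fst z) (fst (snd z)) / 2) \<delta>}"

lemma Wc_cbox: "Wc c = cbox (- (\<chi> i. c)) (\<chi> i. c :: real^'n)"
proof -
  have p: "\<And>a::real. (\<bar>a\<bar> \<le> c) = (-c \<le> a \<and> a \<le> c)" by auto
  show ?thesis by (simp only: Wc_def set_eq_iff mem_box_cart mem_Collect_eq p vector_uminus_component vec_lambda_beta) simp
qed

lemma closed_Wc: "closed (Wc c)" unfolding Wc_cbox by (rule closed_cbox)

lemma Wc_norm: "x \<in> Wc c \<Longrightarrow> norm (x :: real^'n) \<le> real CARD('n) * c"
proof -
  assume "x \<in> Wc c"
  then have "\<forall>i. \<bar>x$i\<bar> \<le> c" by (simp add: Wc_def)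
  then have "sum (\<lambda>i. \<bar>x$i\<bar>) UNIV \<le> sum (\<lambda>i. c) (UNIV :: 'n set)" by (intro sum_mono) auto
  then show ?thesis using norm_le_l1_cart[of x] by simp
qed

lemma Wc_dist: "x \<in> Wc c \<Longrightarrow> y \<in> Wc c \<Longrightarrow> dist (x :: real^'n) y \<le> 2 * real CARD('n) * c"
proof -
  assume "x \<in> Wc c" "y \<in> Wc c"
  then have a: "\<bar>x$i\<bar> \<le> c" "\<bar>y$i\<bar> \<le> c" for i by (auto simp: Wc_def)
  have "\<bar>(x-y)$i\<bar> \<le> 2*c" for i using a[of i] by (simp add: abs_le_iff)
  then have "x - y \<in> Wc (2*c)" by (simp add: Wc_def)
  then show ?thesis using Wc_norm[of "x - y" "2*c"] by (simp add: dist_norm)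
qed

lemma emeasure_Wc:
  fixes c :: real
  assumes "c \<ge> 0"
  shows "emeasure lborel (Wc c :: (real^'n) set) \<le> ennreal (unit_ball_vol CARD('n) * (real CARD('n) * c)^CARD('n))"
proof -
  have "Wc c \<subseteq> cball (0::real^'n) (CARD('n) * c)"
    using Wc_norm by auto
  then have "emeasure lborel (Wc c :: (real^'n) set) \<le> emeasure lborel (cball (0::real^'n) (CARD('n) * c))"
    by (intro emeasure_mono) auto
  also have "\<dots> = ennreal (unit_ball_vol CARD('n) * (real CARD('n) * c)^CARD('n))"
    using assms by (subst emeasure_cball) auto
  finally show ?thesis .
qed

lemma Tset_borel: "(Tset c \<delta> :: ((real^'n) \<times> (real^'n) \<times> (real^'n)) set) \<in> sets borel"
proof -
  define A where "A = (fst -` Wc c \<inter> (\<lambda>z. fst (snd z)) -` Wc c \<inter>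
      {z :: ((real^'n) \<times> (real^'n) \<times> (real^'n)). dist (snd (snd z)) (midpoint (fst z) (fst (snd z))) \<le> dist (fst z) (fst (snd z)) / 2 + hf (dist (fst z) (fst (snd z)) / 2) \<delta>})"
  define B where "B = {z :: ((real^'n) \<times> (real^'n) \<times> (real^'n)). dist (fst z) (fst (snd z)) / 2 < dist (snd (snd z)) (midpoint (fst z) (fst (snd z)))}"
  have e: "Tset c \<delta> = A \<inter> B"
    unfolding A_def B_def Tset_def by auto
  have "closed A"
    unfolding A_def hf_def midpoint_def
    apply (intro closed_Int)
    apply (rule continuous_closed_vimage[OF closed_Wc]; intro continuous_intros)
    apply (rule continuous_closed_vimage[OF closed_Wc]; intro continuous_intros)
    apply (intro closed_Collect_le continuous_intros)
    apply simp_all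
    done
  moreover have "open B"
    unfolding B_def midpoint_def
    apply (intro open_Collect_less continuous_intros)
    apply simp_all
    done
  ultimately have "A \<in> sets borel" "B \<in> sets borel" by (simp_all add: borel_closed borel_open)
  then show ?thesis unfolding e by (rule sets.Int)
qed

lemma hf_bounds:
  assumes "0 < \<delta>" "\<delta> \<le> 1" "1 \<le> D" "0 \<le> r" "r \<le> D"
  shows "0 \<le> hf r \<delta>" "hf r \<delta> \<le> 5 * sqrt (D*\<delta>)" "r + hf r \<delta> \<le> 6 * D"
proof -
  show "0 \<le> hf r \<delta>" using assms by (simp add: hf_def)
  have "\<delta>^2 \<le> D*\<delta>" using assms by (simp add: power2_eq_square mult_right_mono)
  then have d1: "\<delta> \<le> sqrt (D*\<delta>)" using real_sqrt_le_mono[OF \<open>\<delta>^2 \<le> D*\<delta>\<close>] assms by simp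
  have a1: "4*r*\<delta> \<le> 4*D*\<delta>" using assms by (intro mult_right_mono) auto
  have a2: "4*D*\<delta> = 4*(D*\<delta>)" by (rule mult.assoc)
  have a3: "0 \<le> D*\<delta>" using assms by simp
  have "4*r*\<delta> + 4*\<delta>^2 \<le> 9 * (D*\<delta>)" using a1 a2 a3 \<open>\<delta>^2 \<le> D*\<delta>\<close> by linarith
  then have "sqrt (4*r*\<delta> + 4*\<delta>^2) \<le> sqrt (9 * (D*\<delta>))" by (rule real_sqrt_le_mono)
  also have "\<dots> = 3 * sqrt (D*\<delta>)" by (simp add: real_sqrt_mult)
  finally show h: "hf r \<delta> \<le> 5 * sqrt (D*\<delta>)" using d1 by (simp add: hf_def)
  have "D*\<delta> \<le> D*D" using assms by (simp add: mult_left_mono)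
  then have "sqrt (D*\<delta>) \<le> D" using real_sqrt_le_mono[OF \<open>D*\<delta> \<le> D*D\<close>] assms by simp
  then show "r + hf r \<delta> \<le> 6 * D" using h assms by linarith
qed

lemma section_bound:
  fixes x0 x1 :: "real^'n"
  assumes "x0 \<in> Wc c" "x1 \<in> Wc c" "0 < \<delta>" "\<delta> \<le> 1" "1 \<le> real CARD('n) * c"
  shows "emeasure lborel {x2. dist x0 x1 / 2 < dist x2 (midpoint x0 x1) \<and>
      dist x2 (midpoint x0 x1) \<le> dist x0 x1 / 2 + hf (dist x0 x1 / 2) \<delta>}
    \<le> ennreal (unit_ball_vol CARD('n) * CARD('n) * (5 * sqrt (real CARD('n) * c * \<delta>)) * (6 * (real CARD('n) * c))^(CARD('n)-1))"
proof -
  define D where "D = real CARD('n) * c"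
  define r where "r = dist x0 x1 / 2"
  have r0: "0 \<le> r" by (simp add: r_def)
  have rD: "r \<le> D" using Wc_dist[OF assms(1,2)] by (simp add: r_def D_def)
  note hb = hf_bounds[OF assms(3,4) assms(5)[folded D_def] r0 rD]
  have "emeasure lborel {x2. r < dist x2 (midpoint x0 x1) \<and> dist x2 (midpoint x0 x1) \<le> r + hf r \<delta>}
     \<le> ennreal (unit_ball_vol DIM(real^'n) * DIM(real^'n) * hf r \<delta> * (r + hf r \<delta>)^(DIM(real^'n)-1))"
    by (rule shell_bound[OF r0 hb(1)])
  also have "\<dots> \<le> ennreal (unit_ball_vol CARD('n) * CARD('n) * (5 * sqrt (D * \<delta>)) * (6 * D)^(CARD('n)-1))"
  proof -
    have p: "(r + hf r \<delta>)^(CARD('n)-1) \<le> (6*D)^(CARD('n)-1)"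
      using hb r0 by (intro power_mono) auto
    have "D*\<delta> \<ge> 0" using assms(3,5) unfolding D_def by simp
    then have q: "0 \<le> unit_ball_vol CARD('n) * CARD('n) * (5 * sqrt (D * \<delta>))" by simp
    have q2: "unit_ball_vol CARD('n) * CARD('n) * hf r \<delta> \<le> unit_ball_vol CARD('n) * CARD('n) * (5 * sqrt (D * \<delta>))"
      using hb by (intro mult_left_mono) auto
    show ?thesis using p q q2 hb r0 by (intro ennreal_leI mult_mono) auto
  qed
  finally show ?thesis unfolding r_def D_def .
qed

lemma Tset_bound:
  fixes c \<delta> :: real
  assumes "0 < \<delta>" "\<delta> \<le> 1" "1 \<le> real CARD('n) * c"
  shows "emeasure lborel (Tset c \<delta> :: ((real^'n) \<times> (real^'n) \<times> (real^'n)) set)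
    \<le> ennreal (unit_ball_vol CARD('n) * (CARD('n) * c)^CARD('n)) * (ennreal (unit_ball_vol CARD('n) * (CARD('n) * c)^CARD('n))
       * ennreal (unit_ball_vol CARD('n) * CARD('n) * (5 * sqrt (real CARD('n) * c * \<delta>)) * (6 * (real CARD('n) * c))^(CARD('n)-1)))"
    (is "_ \<le> ?W * (?W * ?B)")
proof -
  have c0: "0 \<le> c" using assms(3) by (smt (verit) mult_nonneg_nonpos of_nat_0_le_iff)
  have Wm: "Wc c \<in> sets (lborel :: (real^'n) measure)" using borel_closed[OF closed_Wc] by simp
  have Tm: "(Tset c \<delta> :: ((real^'n) \<times> (real^'n) \<times> (real^'n)) set) \<in> sets (lborel \<Otimes>\<^sub>M lborel)"
    unfolding lborel_prod using Tset_borel by simp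
  have inner: "emeasure lborel (Pair x0 -` (Tset c \<delta> :: ((real^'n) \<times> (real^'n) \<times> (real^'n)) set))
      \<le> ?W * ?B * indicator (Wc c) x0" for x0 :: "real^'n"
  proof (cases "x0 \<in> Wc c")
    case False
    then have "Pair x0 -` (Tset c \<delta> :: ((real^'n) \<times> (real^'n) \<times> (real^'n)) set) = {}"
      by (auto simp: Tset_def)
    then show ?thesis by simp
  next
    case True
    have S1: "Pair x0 -` (Tset c \<delta> :: ((real^'n) \<times> (real^'n) \<times> (real^'n)) set) \<in> sets (lborel \<Otimes>\<^sub>M lborel)"
      using sets_Pair1[OF Tm] unfolding lborel_prod .
    have "emeasure lborel (Pair x0 -` (Tset c \<delta> :: ((real^'n) \<times> (real^'n) \<times> (real^'n)) set))
        = emeasure (lborel \<Otimes>\<^sub>M lborel) (Pair x0 -` (Tset c \<delta> :: ((real^'n) \<times> (real^'n) \<times> (real^'n)) set))"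
      by (simp add: lborel_prod)
    also have "\<dots> = (\<integral>\<^sup>+x1. emeasure lborel (Pair x1 -` Pair x0 -` (Tset c \<delta> :: ((real^'n) \<times> (real^'n) \<times> (real^'n)) set)) \<partial>lborel)"
      by (rule lborel.emeasure_pair_measure_alt[OF S1])
    also have "\<dots> \<le> (\<integral>\<^sup>+x1. ?B * indicator (Wc c :: (real^'n) set) x1 \<partial>lborel)"
    proof (rule nn_integral_mono)
      fix x1 :: "real^'n"
      show "emeasure lborel (Pair x1 -` Pair x0 -` (Tset c \<delta> :: ((real^'n) \<times> (real^'n) \<times> (real^'n)) set)) \<le> ?B * indicator (Wc c) x1"
      proof (cases "x1 \<in> Wc c")
        case False
        then have "Pair x1 -` Pair x0 -` (Tset c \<delta> :: ((real^'n) \<times> (real^'n) \<times> (real^'n)) set) = {}"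
          by (auto simp: Tset_def)
        then show ?thesis by simp
      next
        case x1: True
        have "Pair x1 -` Pair x0 -` (Tset c \<delta> :: ((real^'n) \<times> (real^'n) \<times> (real^'n)) set) =
          {x2. dist x0 x1 / 2 < dist x2 (midpoint x0 x1) \<and>
      dist x2 (midpoint x0 x1) \<le> dist x0 x1 / 2 + hf (dist x0 x1 / 2) \<delta>}"
          using True x1 by (auto simp: Tset_def)
        then show ?thesis using section_bound[OF True x1 assms] x1 by simp
      qed
    qed
    also have "\<dots> = ?B * emeasure lborel (Wc c :: (real^'n) set)" by (rule nn_integral_cmult_indicator[OF Wm])
    also have "\<dots> \<le> ?B * ?W" using emeasure_Wc[OF c0, where 'n='n] by (intro mult_left_mono) auto
    finally show ?thesis using True by (simp add: mult.commute)
  qed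
  have "emeasure lborel (Tset c \<delta> :: ((real^'n) \<times> (real^'n) \<times> (real^'n)) set)
      = emeasure (lborel \<Otimes>\<^sub>M lborel) (Tset c \<delta> :: ((real^'n) \<times> (real^'n) \<times> (real^'n)) set)"
    by (simp add: lborel_prod)
  also have "\<dots> = (\<integral>\<^sup>+x0. emeasure lborel (Pair x0 -` (Tset c \<delta> :: ((real^'n) \<times> (real^'n) \<times> (real^'n)) set)) \<partial>lborel)"
    by (rule lborel.emeasure_pair_measure_alt[OF Tm])
  also have "\<dots> \<le> (\<integral>\<^sup>+x0. (?W * ?B) * indicator (Wc c :: (real^'n) set) x0 \<partial>lborel)"
    by (intro nn_integral_mono inner)
  also have "\<dots> = (?W * ?B) * emeasure lborel (Wc c :: (real^'n) set)" by (rule nn_integral_cmult_indicator[OF Wm])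
  also have "\<dots> \<le> (?W * ?B) * ?W" using emeasure_Wc[OF c0, where 'n='n] by (intro mult_left_mono) auto
  finally show ?thesis by (simp add: mult_ac)
qed

lemma real_bound:
  fixes K x \<epsilon> c D \<delta> :: real and d :: nat
  assumes K: "K \<ge> 0" and d: "d \<ge> 1" and x: "x \<ge> 3" and e: "\<epsilon> \<le> 1/2"
    and c: "c = 3 * (ln x)^2" and D: "D = real d * c" and \<delta>: "\<delta> = x powr (-2 + \<epsilon>)"
  shows "(K * D^d) * ((K * D^d) * (K * d * (5 * sqrt (D*\<delta>)) * (6*D)^(d-1)))
     \<le> (K^3 * 5 * d * 6^(d-1) * (3*d)^(3*d) * (12*d)^(6*d)) * x powr (-1/4)"
proof -
  define L where "L = ln x"
  have "ln 3 \<le> ln x" using x by simp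
  then have L1: "1 \<le> L" unfolding L_def using ln3_gt_1 by linarith
  have D1: "1 \<le> D"
  proof -
    have "1 \<le> L^2" using L1 by (simp add: one_le_power)
    then have "1 \<le> c" using c L_def by simp
    moreover have "1 \<le> real d" using d by simp
    ultimately show ?thesis using D mult_mono[of 1 "real d" 1 c] by simp
  qed
  have \<delta>0: "0 \<le> \<delta>" using \<delta> by simp
  have s1: "sqrt (D*\<delta>) \<le> D * sqrt \<delta>"
  proof -
    have "D \<le> D*D" using D1 mult_left_mono[of 1 D D] by simp
    then have "sqrt D \<le> sqrt (D*D)" by (rule real_sqrt_le_mono)
    then have "sqrt D \<le> D" using D1 by simp
    then show ?thesis using \<delta>0 by (simp add: real_sqrt_mult mult_right_mono)
  qed
  define A where "A = K^3 * 5 * d * 6^(d-1)"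
  have A0: "0 \<le> A" using K by (simp add: A_def)
  have eq1: "(K * D^d) * ((K * D^d) * (K * d * (5 * sqrt (D*\<delta>)) * (6*D)^(d-1)))
      = A * D^d * D^d * (D^(d-1) * sqrt (D*\<delta>))"
    unfolding A_def power_mult_distrib by (simp add: power3_eq_cube mult_ac)
  have le1: "A * D^d * D^d * (D^(d-1) * sqrt (D*\<delta>)) \<le> A * D^d * D^d * (D^(d-1) * (D * sqrt \<delta>))"
    using s1 A0 D1 by (intro mult_left_mono) auto
  have eq2: "D^(d-1) * (D * sqrt \<delta>) = D^d * sqrt \<delta>"
    using d by (cases d) (auto simp: mult_ac)
  have eq3: "A * D^d * D^d * (D^d * sqrt \<delta>) = A * D^(3*d) * sqrt \<delta>"
  proof -
    have "D^(3*d) = D^(d+d+d)" by (rule arg_cong[where f="\<lambda>k. D^k"]) simp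
    also have "\<dots> = D^d*D^d*D^d" by (simp only: power_add)
    finally show ?thesis by (simp add: mult_ac)
  qed
  have eq4: "D^(3*d) = (3*d)^(3*d) * L^(6*d)"
  proof -
    have "D = (3*real d) * L^2" using D c L_def by simp
    then have "D^(3*d) = (3*real d)^(3*d) * (L^2)^(3*d)" by (simp add: power_mult_distrib)
    also have "(L^2)^(3*d) = L^(6*d)" by (simp add: power_mult[symmetric])
    finally show ?thesis by simp
  qed
  have le2: "L^(6*d) \<le> (12*d)^(6*d) * x powr (1/2)"
  proof -
    have a: "0 < 1/(12*real d)" using d by simp
    have "L \<le> x powr (1/(12*real d)) / (1/(12*real d))"
      unfolding L_def using ln_powr_bound[OF _ a] x by simp
    then have "L \<le> 12*real d * x powr (1/(12*real d))" by (simp add: mult.commute)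
    then have "L^(6*d) \<le> (12*real d * x powr (1/(12*real d)))^(6*d)"
      using L1 by (intro power_mono) auto
    also have "\<dots> = (12*real d)^(6*d) * (x powr (1/(12*real d)))^(6*d)"
      by (simp add: power_mult_distrib)
    also have "(x powr (1/(12*real d)))^(6*d) = x powr (1/2)"
      using x d by (subst powr_power) auto
    finally show ?thesis by simp
  qed
  have le3: "sqrt \<delta> \<le> x powr (-3/4)"
  proof -
    have "sqrt \<delta> = x powr ((-2 + \<epsilon>)/2)" using \<delta> x by (simp add: powr_half_sqrt_powr)
    also have "\<dots> \<le> x powr (-3/4)" using e x by (intro powr_mono) auto
    finally show ?thesis .
  qed
  have le4: "A * ((3*d)^(3*d) * L^(6*d)) * sqrt \<delta> \<le> A * ((3*d)^(3*d) * ((12*d)^(6*d) * x powr (1/2))) * x powr (-3/4)"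
    using le2 le3 A0 D1 \<delta>0 L1 by (intro mult_mono mult_left_mono) auto
  have eq5: "A * ((3*d)^(3*d) * ((12*d)^(6*d) * x powr (1/2))) * x powr (-3/4) = (A * (3*d)^(3*d) * (12*d)^(6*d)) * (x powr (1/2) * x powr (-3/4))"
    by (simp add: mult_ac)
  have eq6: "x powr (1/2) * x powr (-3/4) = x powr (-1/4)"
    by (simp add: powr_add[symmetric])
  have "(K * D^d) * ((K * D^d) * (K * d * (5 * sqrt (D*\<delta>)) * (6*D)^(d-1)))
      \<le> A * D^d * D^d * (D^(d-1) * (D * sqrt \<delta>))" using order_trans[OF eq_refl[OF eq1] le1] .
  also have "\<dots> = A * D^(3*d) * sqrt \<delta>" unfolding eq2 by (rule eq3)
  also have "\<dots> = A * ((3*d)^(3*d) * L^(6*d)) * sqrt \<delta>" by (simp only: eq4)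
  also have "\<dots> \<le> A * ((3*d)^(3*d) * ((12*d)^(6*d) * x powr (1/2))) * x powr (-3/4)" by (rule le4)
  also have "\<dots> = (A * (3*d)^(3*d) * (12*d)^(6*d)) * x powr (-1/4)" by (simp only: eq5 eq6)
  finally show ?thesis unfolding A_def .
qed

lemma W_eq:
  assumes "n \<ge> 2"
  shows "W (s_plus CARD('n) n) = (Wc (3 * (ln (real n))^2) :: (real^'n) set)"
proof -
  have L: "ln (real n) > 0" using assms by simp
  have sp: "0 < 3 * s_n n" using L by (simp add: s_n_def)
  have "s_plus CARD('n) n powr (1 / real CARD('n)) = ((3 * s_n n) powr real CARD('n)) powr (1 / real CARD('n))"
    unfolding s_plus_def using sp by (simp add: powr_realpow)
  also have "\<dots> = 3 * s_n n" using sp by (simp add: powr_powr)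
  finally have "s_plus CARD('n) n powr (1 / real CARD('n)) / 2 = 3 * (ln (real n))^2"
    by (simp add: s_n_def)
  then show ?thesis unfolding W_def Wc_def by simp
qed

lemma meas_bound:
  fixes S T :: "'a::euclidean_space set"
  assumes "S \<subseteq> T" "T \<in> sets borel" "emeasure lborel T \<le> ennreal B" "0 \<le> B"
  shows "measure lebesgue S \<le> B"
proof -
  have Tl: "T \<in> sets lebesgue" using assms(2) by simp
  have eT: "emeasure lebesgue T = emeasure lborel T" using assms(2) by simp
  have mT: "measure lebesgue T \<le> B"
    unfolding measure_def eT using assms(3,4) by (intro enn2real_leI)
  show ?thesis
  proof (cases "S \<in> sets lebesgue")
    case True
    have "T \<in> fmeasurable lebesgue"
      using Tl assms(3) eT by (intro fmeasurableI) (auto simp: order_le_less_trans)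
    then have "measure lebesgue S \<le> measure lebesgue T"
      using True assms(1) by (intro measure_mono_fmeasurable)
    then show ?thesis using mT by simp
  next
    case False
    then show ?thesis using assms(4) by (simp add: measure_notin_sets)
  qed
qed

theorem mainTheorem10:
  assumes "CARD('n) \<ge> 2"
  shows "\<exists>\<epsilon>0>0. \<forall>\<epsilon>. 0 < \<epsilon> \<and> \<epsilon> < \<epsilon>0 \<longrightarrow>
    (\<lambda>n::nat. measure lebesgue
       {(x0 :: real^'n, x1, x2).
          x0 \<in> W (s_plus CARD('n) n) \<and> x1 \<in> W (s_plus CARD('n) n) \<and> x2 \<in> W (s_plus CARD('n) n) \<and>
          d01 x0 x1 < d012 x0 x1 x2 \<and>
          d012 x0 x1 x2 \<le> d01 x0 x1 + real n powr (-2 + \<epsilon>)})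
    \<in> O(\<lambda>n. real n powr (-1/4))"
proof (intro exI[of _ "1/2"] conjI allI impI)
  show "(0::real) < 1/2" by simp
  fix \<epsilon> :: real
  assume e: "0 < \<epsilon> \<and> \<epsilon> < 1/2"
  define d where "d = CARD('n)"
  define K where "K = unit_ball_vol (real d)"
  define C where "C = K^3 * 5 * d * 6^(d-1) * (3*d)^(3*d) * (12*d)^(6*d)"
  have d1: "d \<ge> 1" using assms by (simp add: d_def)
  have K0: "K \<ge> 0" by (simp add: K_def)
  show "(\<lambda>n::nat. measure lebesgue
       {(x0 :: real^'n, x1, x2).
          x0 \<in> W (s_plus CARD('n) n) \<and> x1 \<in> W (s_plus CARD('n) n) \<and> x2 \<in> W (s_plus CARD('n) n) \<and>
          d01 x0 x1 < d012 x0 x1 x2 \<and>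
          d012 x0 x1 x2 \<le> d01 x0 x1 + real n powr (-2 + \<epsilon>)})
    \<in> O(\<lambda>n. real n powr (-1/4))"
  proof (rule bigoI[where c = C], unfold eventually_at_top_linorder, intro exI[of _ 3] allI impI)
    fix n :: nat
    assume n3: "n \<ge> 3"
    define x where "x = real n"
    define c where "c = 3 * (ln x)^2"
    define \<delta> where "\<delta> = x powr (-2 + \<epsilon>)"
    have x3: "x \<ge> 3" using n3 by (simp add: x_def)
    have L1: "1 \<le> ln x"
    proof -
      have "ln 3 \<le> ln x" using x3 by simp
      then show ?thesis using ln3_gt_1 by linarith
    qed
    have "1 \<le> (ln x)^2" using L1 by (simp add: one_le_power)
    then have c1: "1 \<le> c" unfolding c_def by simp
    have D1: "1 \<le> real d * c" using d1 c1 mult_mono[of 1 "real d" 1 c] by simp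
    have \<delta>0: "0 < \<delta>" using x3 by (simp add: \<delta>_def)
    have \<delta>1: "\<delta> \<le> 1"
    proof -
      have "x powr (-2 + \<epsilon>) \<le> x powr 0" using x3 e by (intro powr_mono) auto
      then show ?thesis using x3 by (simp add: \<delta>_def)
    qed
    let ?S = "{(x0 :: real^'n, x1, x2).
          x0 \<in> W (s_plus CARD('n) n) \<and> x1 \<in> W (s_plus CARD('n) n) \<and> x2 \<in> W (s_plus CARD('n) n) \<and>
          d01 x0 x1 < d012 x0 x1 x2 \<and>
          d012 x0 x1 x2 \<le> d01 x0 x1 + real n powr (-2 + \<epsilon>)}"
    have WW: "W (s_plus CARD('n) n) = (Wc c :: (real^'n) set)"
      unfolding c_def x_def using n3 by (intro W_eq) simp
    have sub: "?S \<subseteq> Tset c \<delta>"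
    proof
      fix z assume zS: "z \<in> ?S"
      obtain x0 x1 x2 :: "real^'n" where z: "z = (x0, x1, x2)" by (metis prod_cases3)
      have H: "x0 \<in> W (s_plus CARD('n) n)" "x1 \<in> W (s_plus CARD('n) n)"
        "d01 x0 x1 < d012 x0 x1 x2" "d012 x0 x1 x2 \<le> d01 x0 x1 + real n powr (-2 + \<epsilon>)"
        using zS unfolding z by auto
      have g1: "d01 x0 x1 < dist x2 (midpoint x0 x1)" by (rule geo1[OF H(3)])
      have g2: "dist x2 (midpoint x0 x1) < d01 x0 x1 + 2*\<delta> + sqrt (4 * d01 x0 x1 * \<delta> + 4 * \<delta>^2)"
        using H(4) \<delta>0 unfolding \<delta>_def x_def by (intro geo2) auto
      show "z \<in> Tset c \<delta>"
        using H(1,2) g1 g2 WW unfolding z Tset_def hf_def d01_def by auto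
    qed
    define V where "V = (K * (real d * c)^d) * ((K * (real d * c)^d) * (K * d * (5 * sqrt (real d * c*\<delta>)) * (6*(real d * c))^(d-1)))"
    have V0: "0 \<le> V" using K0 c1 \<delta>0 unfolding V_def by simp
    have eT: "emeasure lborel (Tset c \<delta> :: ((real^'n) \<times> (real^'n) \<times> (real^'n)) set) \<le> ennreal V"
    proof -
      have "emeasure lborel (Tset c \<delta> :: ((real^'n) \<times> (real^'n) \<times> (real^'n)) set)
        \<le> ennreal (K * (real d * c)^d) * (ennreal (K * (real d * c)^d) * ennreal (K * d * (5 * sqrt (real d * c*\<delta>)) * (6*(real d * c))^(d-1)))"
        using Tset_bound[OF \<delta>0 \<delta>1 D1[unfolded d_def]] unfolding K_def d_def .
      also have "\<dots> = ennreal V"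
        unfolding V_def using K0 c1 \<delta>0 by (simp add: ennreal_mult[symmetric])
      finally show ?thesis .
    qed
    have m: "measure lebesgue ?S \<le> V"
      by (rule meas_bound[OF sub Tset_borel eT V0])
    have "V \<le> C * x powr (-1/4)"
      unfolding V_def C_def
      by (rule real_bound[OF K0 d1 x3 _ c_def refl \<delta>_def]) (use e in simp)
    then have "measure lebesgue ?S \<le> C * x powr (-1/4)" using m by simp
    then show "norm (measure lebesgue ?S) \<le> C * norm (real n powr (-1/4))"
      by (simp add: x_def)
  qed
qed

end
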